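(* There exist constants $\epsilon>0$, $c>0$ and $d_0>1$ such that for every $p=p(n)$ with $\frac{d_0}{n}\le p\le\frac{2\ln n}{n}$, a.a.s. every set $S\subseteq V(H_{n,p})$ inducing a connected subgraph, with $|S|\ge\frac{c\ln n}{d}$ and $d(S)\le\frac{d(H_{n,p})}{2}$, satisfies $e^{\mathrm{out}}(S)\ge\epsilon\,d\,|S|$.
   Context: $G_{n,p}$ is the random graph on $V_n=\{1,\dots,n\}$ with each possible edge present independently with probability $p$; $d=pn$; $H_{n,p}$ is the largest component of $G_{n,p}$; a.a.s. means with probability tending to $1$. For a vertex set $S$, $d(S)=\sum_{v\in S}d(v)$ is the sum of degrees, $d(H_{n,p})$ is the sum of degrees over all vertices of $H_{n,p}$, and $e^{\mathrm{out}}(S)$ is the number of edges with exactly one endpoint in $S$. *)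

theory Defs
  imports Complex_Main
begin

text \<open>Graphs on the vertex set {1..n} are represented by their edge sets:
  sets of 2-element subsets of {1..n}.\<close>

definition all_edges :: "nat \<Rightarrow> nat set set" where
  "all_edges n = {e. \<exists>u v. u \<in> {1..n} \<and> v \<in> {1..n} \<and> u \<noteq> v \<and> e = {u, v}}"

definition gnp_prob :: "nat \<Rightarrow> real \<Rightarrow> (nat set set \<Rightarrow> bool) \<Rightarrow> real" where
  "gnp_prob n p P =
     (\<Sum>E \<in> {E \<in> Pow (all_edges n). P E}.
        p ^ card E * (1 - p) ^ (card (all_edges n) - card E))"

definition degree :: "nat set set \<Rightarrow> nat \<Rightarrow> nat" where
  "degree E v = card {u. u \<noteq> v \<and> {u, v} \<in> E}"

definition deg_sum :: "nat set set \<Rightarrow> nat set \<Rightarrow> nat" where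
  "deg_sum E S = (\<Sum>v\<in>S. degree E v)"

definition e_out :: "nat set set \<Rightarrow> nat set \<Rightarrow> nat" where
  "e_out E S = card {e \<in> E. card (e \<inter> S) = 1}"

definition ind_rel :: "nat set set \<Rightarrow> nat set \<Rightarrow> (nat \<times> nat) set" where
  "ind_rel E A = {(x, y). x \<in> A \<and> y \<in> A \<and> x \<noteq> y \<and> {x, y} \<in> E}"

definition connected_set :: "nat set set \<Rightarrow> nat set \<Rightarrow> bool" where
  "connected_set E S \<longleftrightarrow> S \<noteq> {} \<and> (\<forall>u\<in>S. \<forall>v\<in>S. (u, v) \<in> (ind_rel E S)\<^sup>*)"

definition component :: "nat set set \<Rightarrow> nat \<Rightarrow> nat set \<Rightarrow> bool" where
  "component E n C \<longleftrightarrow>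
     (\<exists>v\<in>{1..n}. C = {u \<in> {1..n}. (v, u) \<in> (ind_rel E {1..n})\<^sup>*})"

definition largest_component :: "nat set set \<Rightarrow> nat \<Rightarrow> nat set \<Rightarrow> bool" where
  "largest_component E n H \<longleftrightarrow>
     component E n H \<and> (\<forall>C. component E n C \<longrightarrow> card C \<le> card H)"

end

theory Submission
  imports Defs "HOL-Library.FuncSet" "HOL-Real_Asymp.Real_Asymp"
begin


lemma all_edges_alt: "all_edges n = {e. e \<subseteq> {1..n} \<and> card e = 2}"
  unfolding all_edges_def by (auto simp: card_2_iff; blast)

lemma finite_all_edges: "finite (all_edges n)"
  unfolding all_edges_alt by (rule finite_subset[of _ "Pow {1..n}"]) auto

lemma card_all_edges: "card (all_edges n) = n choose 2"
  unfolding all_edges_alt using n_subsets[of "{1..n}" 2] by simp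

definition W :: "nat \<Rightarrow> real \<Rightarrow> nat set set \<Rightarrow> real" where
  "W n p E = p ^ card E * (1 - p) ^ (card (all_edges n) - card E)"

definition gexp :: "nat \<Rightarrow> real \<Rightarrow> (nat set set \<Rightarrow> real) \<Rightarrow> real" where
  "gexp n p \<Phi> = (\<Sum>E\<in>Pow (all_edges n). W n p E * \<Phi> E)"

lemma gnp_prob_gexp: "gnp_prob n p P = gexp n p (\<lambda>E. if P E then 1 else 0)"
proof -
  have "gexp n p (\<lambda>E. if P E then 1 else 0) = (\<Sum>E\<in>Pow (all_edges n). if P E then W n p E else 0)"
    unfolding gexp_def by (rule sum.cong) auto
  also have "\<dots> = (\<Sum>E\<in>{E \<in> Pow (all_edges n). P E}. W n p E)"
    using sum.inter_filter[of "Pow (all_edges n)" "W n p" P] by (simp add: finite_all_edges)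
  finally show ?thesis unfolding gnp_prob_def W_def by simp
qed

lemma gexp_prod_general:
  fixes g :: "nat set \<Rightarrow> bool \<Rightarrow> real"
  shows "gexp n p (\<lambda>E. \<Prod>e\<in>all_edges n. g e (e \<in> E)) = (\<Prod>e\<in>all_edges n. p * g e True + (1 - p) * g e False)"
proof -
  let ?N = "all_edges n"
  have fin: "finite ?N" by (rule finite_all_edges)
  have "(\<Prod>e\<in>?N. p * g e True + (1 - p) * g e False)
     = (\<Sum>X\<in>Pow ?N. (\<Prod>e\<in>X. p * g e True) * (\<Prod>e\<in>?N-X. (1 - p) * g e False))"
    by (rule prod_add[OF fin])
  also have "\<dots> = (\<Sum>X\<in>Pow ?N. W n p X * (\<Prod>e\<in>?N. g e (e \<in> X)))"
  proof (rule sum.cong[OF refl])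
    fix X assume X: "X \<in> Pow ?N"
    then have XN: "X \<subseteq> ?N" by auto
    have fX: "finite X" using XN fin finite_subset by blast
    have "(\<Prod>e\<in>?N. g e (e \<in> X)) = (\<Prod>e\<in>X. g e (e \<in> X)) * (\<Prod>e\<in>?N-X. g e (e \<in> X))"
      using prod.subset_diff[OF XN fin, of "\<lambda>e. g e (e \<in> X)"] by (simp add: mult.commute)
    also have "\<dots> = (\<Prod>e\<in>X. g e True) * (\<Prod>e\<in>?N-X. g e False)"
      by (intro arg_cong2[where f="(*)"] prod.cong) auto
    finally have 1: "(\<Prod>e\<in>?N. g e (e \<in> X)) = (\<Prod>e\<in>X. g e True) * (\<Prod>e\<in>?N-X. g e False)" .
    have 2: "card (?N - X) = card ?N - card X" using XN fin by (simp add: card_Diff_subset fX)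
    show "(\<Prod>e\<in>X. p * g e True) * (\<Prod>e\<in>?N-X. (1 - p) * g e False) = W n p X * (\<Prod>e\<in>?N. g e (e \<in> X))"
      unfolding 1 W_def prod.distrib using 2 by (simp add: mult_ac)
  qed
  finally show ?thesis unfolding gexp_def by simp
qed



lemma gexp_cong: "(\<And>E. E \<subseteq> all_edges n \<Longrightarrow> \<Phi> E = \<Psi> E) \<Longrightarrow> gexp n p \<Phi> = gexp n p \<Psi>"
  unfolding gexp_def by (rule sum.cong) auto

lemma prod_indic_restrict:
  assumes "finite N" "A \<subseteq> N"
  shows "(\<Prod>e\<in>N. if e \<in> A then (c::real) else 1) = c ^ card A"
proof -
  have "(\<Prod>e\<in>N. if e \<in> A then c else 1) = (\<Prod>e\<in>N \<inter> A. c)"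
    by (rule prod.inter_restrict[OF assms(1), symmetric])
  also have "N \<inter> A = A" using assms by auto
  finally show ?thesis by simp
qed

lemma prod_indic_subset:
  assumes "finite N" "F \<subseteq> N"
  shows "(\<Prod>e\<in>N. if e \<in> F then (if e \<in> E then 1 else 0) else (1::real)) = (if F \<subseteq> E then 1 else 0)"
proof -
  have "(\<Prod>e\<in>N. if e \<in> F then (if e \<in> E then 1 else 0) else (1::real)) = (\<Prod>e\<in>N \<inter> F. if e \<in> E then 1 else 0)"
    by (rule prod.inter_restrict[OF assms(1), symmetric])
  also have "N \<inter> F = F" using assms by auto
  finally have 1: "(\<Prod>e\<in>N. if e \<in> F then (if e \<in> E then 1 else 0) else (1::real)) = (\<Prod>e\<in>F. if e \<in> E then 1 else 0)" .
  show ?thesis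
  proof (cases "F \<subseteq> E")
    case True
    then show ?thesis unfolding 1 by (simp add: subset_iff)
  next
    case False
    then obtain e where "e \<in> F" "e \<notin> E" by auto
    moreover have "finite F" using assms finite_subset by blast
    ultimately show ?thesis unfolding 1 using False by (auto intro!: prod_zero)
  qed
qed

lemma gexp_FOR:
  assumes F: "F \<subseteq> all_edges n" and Ou: "Ou \<subseteq> all_edges n" and R: "R \<subseteq> all_edges n"
    and d1: "F \<inter> Ou = {}" and d2: "F \<inter> R = {}" and d3: "Ou \<inter> R = {}"
  shows "gexp n p (\<lambda>E. (if F \<subseteq> E then 1 else 0) * x ^ card (E \<inter> Ou) * y ^ card (E \<inter> R))
     = p ^ card F * (1 - p + p * x) ^ card Ou * (1 - p + p * y) ^ card R"
proof -
  let ?N = "all_edges n"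
  have fin: "finite ?N" by (rule finite_all_edges)
  define g where "g e b = (if e \<in> F then (if b then 1 else 0) else 1) *
      (if e \<in> Ou \<and> b then x else 1) * (if e \<in> R \<and> b then y else (1::real))" for e b
  have "gexp n p (\<lambda>E. (if F \<subseteq> E then 1 else 0) * x ^ card (E \<inter> Ou) * y ^ card (E \<inter> R))
      = gexp n p (\<lambda>E. \<Prod>e\<in>?N. g e (e \<in> E))"
  proof (rule gexp_cong)
    fix E assume E: "E \<subseteq> ?N"
    have a: "(\<Prod>e\<in>?N. if e \<in> Ou \<and> e \<in> E then x else 1) = x ^ card (E \<inter> Ou)"
      using prod_indic_restrict[OF fin, of "Ou \<inter> E" x] Ou by (auto simp: Int_commute conj_commute)
    have b: "(\<Prod>e\<in>?N. if e \<in> R \<and> e \<in> E then y else 1) = y ^ card (E \<inter> R)"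
      using prod_indic_restrict[OF fin, of "R \<inter> E" y] R by (auto simp: Int_commute conj_commute)
    show "(if F \<subseteq> E then 1 else 0) * x ^ card (E \<inter> Ou) * y ^ card (E \<inter> R) = (\<Prod>e\<in>?N. g e (e \<in> E))"
      unfolding g_def prod.distrib a b prod_indic_subset[OF fin F] ..
  qed
  also have "\<dots> = (\<Prod>e\<in>?N. p * g e True + (1 - p) * g e False)"
    by (rule gexp_prod_general)
  also have "\<dots> = (\<Prod>e\<in>?N. (if e \<in> F then p else 1) * (if e \<in> Ou then 1 - p + p * x else 1) * (if e \<in> R then 1 - p + p * y else 1))"
    by (rule prod.cong[OF refl]) (use d1 d2 d3 in \<open>auto simp: g_def algebra_simps\<close>)
  also have "\<dots> = p ^ card F * (1 - p + p * x) ^ card Ou * (1 - p + p * y) ^ card R"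
    unfolding prod.distrib prod_indic_restrict[OF fin F] prod_indic_restrict[OF fin Ou] prod_indic_restrict[OF fin R] ..
  finally show ?thesis .
qed

lemma gexp_mono:
  assumes "0 \<le> p" "p \<le> 1" "\<And>E. E \<subseteq> all_edges n \<Longrightarrow> \<Phi> E \<le> \<Psi> E"
  shows "gexp n p \<Phi> \<le> gexp n p \<Psi>"
  unfolding gexp_def
proof (rule sum_mono)
  fix E assume "E \<in> Pow (all_edges n)"
  moreover have "0 \<le> W n p E" unfolding W_def using assms by simp
  ultimately show "W n p E * \<Phi> E \<le> W n p E * \<Psi> E" using assms(3) by (simp add: mult_left_mono)
qed

lemma gexp_sum:
  assumes "finite I"
  shows "gexp n p (\<lambda>E. \<Sum>i\<in>I. f i E) = (\<Sum>i\<in>I. gexp n p (f i))"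
  unfolding gexp_def sum_distrib_left by (rule sum.swap)

lemma gexp_add: "gexp n p (\<lambda>E. f E + g E) = gexp n p f + gexp n p g"
  unfolding gexp_def by (simp add: distrib_left sum.distrib)

lemma gexp_cmult: "gexp n p (\<lambda>E. c * f E) = c * gexp n p f"
  unfolding gexp_def by (simp add: sum_distrib_left mult_ac)

lemma gnp_total: "gnp_prob n p (\<lambda>E. P E) + gnp_prob n p (\<lambda>E. \<not> P E) = 1"
proof -
  have "gnp_prob n p (\<lambda>E. P E) + gnp_prob n p (\<lambda>E. \<not> P E) = gexp n p (\<lambda>E. (if {} \<subseteq> E then 1 else 0) * 1 ^ card (E \<inter> {}) * 1 ^ card (E \<inter> {}))"
    unfolding gnp_prob_gexp gexp_add[symmetric] by (rule gexp_cong) auto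
  also have "\<dots> = 1" by (subst gexp_FOR) auto
  finally show ?thesis .
qed



lemma degree_alt:
  assumes "E \<subseteq> all_edges n"
  shows "degree E v = card {e \<in> E. v \<in> e}"
  unfolding degree_def
proof (rule bij_betw_same_card)
  show "bij_betw (\<lambda>u. {u, v}) {u. u \<noteq> v \<and> {u, v} \<in> E} {e \<in> E. v \<in> e}"
    unfolding bij_betw_def
  proof
    show "inj_on (\<lambda>u. {u, v}) {u. u \<noteq> v \<and> {u, v} \<in> E}"
      by (auto simp: inj_on_def doubleton_eq_iff)
    show "(\<lambda>u. {u, v}) ` {u. u \<noteq> v \<and> {u, v} \<in> E} = {e \<in> E. v \<in> e}"
    proof
      show "{e \<in> E. v \<in> e} \<subseteq> (\<lambda>u. {u, v}) ` {u. u \<noteq> v \<and> {u, v} \<in> E}"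
      proof
        fix e assume e: "e \<in> {e \<in> E. v \<in> e}"
        then obtain a b where ab: "e = {a, b}" "a \<noteq> b" using assms unfolding all_edges_def by blast
        show "e \<in> (\<lambda>u. {u, v}) ` {u. u \<noteq> v \<and> {u, v} \<in> E}"
        proof (cases "v = a")
          case True
          then show ?thesis using e ab by (intro image_eqI[of _ _ b]) (auto simp: insert_commute)
        next
          case False
          then have "v = b" using e ab by auto
          then show ?thesis using e ab by (intro image_eqI[of _ _ a]) auto
        qed
      qed
    qed auto
  qed
qed

lemma deg_sum_alt:
  assumes "E \<subseteq> all_edges n" "finite A"
  shows "deg_sum E A = (\<Sum>e\<in>E. card (e \<inter> A))"
proof -
  have fE: "finite E" using assms(1) finite_all_edges finite_subset by blast
  have "deg_sum E A = (\<Sum>v\<in>A. \<Sum>e\<in>E. if v \<in> e then 1 else 0)"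
    unfolding deg_sum_def degree_alt[OF assms(1)]
  proof (rule sum.cong[OF refl])
    fix v assume "v \<in> A"
    have "(\<Sum>e\<in>E. if v \<in> e then 1 else 0) = card (E \<inter> {e. v \<in> e})"
      using sum.If_cases[OF fE, of "\<lambda>e. v \<in> e" "\<lambda>_. 1::nat" "\<lambda>_. 0"] by simp
    also have "E \<inter> {e. v \<in> e} = {e \<in> E. v \<in> e}" by auto
    finally show "card {e \<in> E. v \<in> e} = (\<Sum>e\<in>E. if v \<in> e then 1 else 0)" by simp
  qed
  also have "\<dots> = (\<Sum>e\<in>E. \<Sum>v\<in>A. if v \<in> e then 1 else 0)" by (rule sum.swap)
  also have "\<dots> = (\<Sum>e\<in>E. card (e \<inter> A))"
    by (rule sum.cong[OF refl]) (simp add: sum.If_cases assms(2) Int_commute)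
  finally show ?thesis .
qed

definition Oset :: "nat \<Rightarrow> nat set \<Rightarrow> nat set set" where
  "Oset n S = {e \<in> all_edges n. card (e \<inter> S) = 1}"

lemma e_out_alt: "E \<subseteq> all_edges n \<Longrightarrow> e_out E S = card (E \<inter> Oset n S)"
  unfolding e_out_def Oset_def by (rule arg_cong[where f = card]) auto

lemma card_Oset:
  assumes "S \<subseteq> {1..n}"
  shows "card S * card ({1..n} - S) \<le> card (Oset n S)"
proof -
  have "card S * card ({1..n} - S) = card (S \<times> ({1..n} - S))" by (simp add: card_cartesian_product)
  also have "\<dots> = card ((\<lambda>(a, b). {a, b}) ` (S \<times> ({1..n} - S)))"
    by (rule card_image[symmetric]) (auto simp: inj_on_def doubleton_eq_iff)
  also have "\<dots> \<le> card (Oset n S)"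
  proof (rule card_mono)
    show "finite (Oset n S)" unfolding Oset_def using finite_all_edges by simp
    show "(\<lambda>(a, b). {a, b}) ` (S \<times> ({1..n} - S)) \<subseteq> Oset n S"
    proof
      fix e assume "e \<in> (\<lambda>(a, b). {a, b}) ` (S \<times> ({1..n} - S))"
      then obtain a b where ab: "a \<in> S" "b \<in> {1..n} - S" "e = {a, b}" by auto
      then have "e \<inter> S = {a}" by auto
      moreover have "e \<in> all_edges n" unfolding all_edges_def using ab assms by blast
      ultimately show "e \<in> Oset n S" unfolding Oset_def by simp
    qed
  qed
  finally show ?thesis .
qed

definition Rset :: "nat set \<Rightarrow> nat set set" where
  "Rset S = {e. e \<subseteq> S \<and> card e = 2}"

lemma Rset_sub: "S \<subseteq> {1..n} \<Longrightarrow> Rset S \<subseteq> all_edges n"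
  unfolding Rset_def all_edges_alt by auto

lemma card_Rset: "finite S \<Longrightarrow> card (Rset S) = card S choose 2"
  unfolding Rset_def using n_subsets by blast



lemma parent_fun:
  assumes conn: "connected_set E S" and r: "r \<in> S"
  shows "\<exists>f \<in> S \<rightarrow>\<^sub>E S. (\<forall>x\<in>S-{r}. {x, f x} \<in> E \<and> f x \<noteq> x) \<and> inj_on (\<lambda>x. {x, f x}) (S - {r})"
proof -
  let ?R = "ind_rel E S"
  define dist where "dist x = (LEAST k. (r, x) \<in> ?R ^^ k)" for x
  have reach: "(r, x) \<in> ?R ^^ dist x" if "x \<in> S" for x
  proof -
    have "(r, x) \<in> ?R\<^sup>*" using conn r that unfolding connected_set_def by blast
    then obtain k where "(r, x) \<in> ?R ^^ k" using rtrancl_power by blast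
    then show ?thesis unfolding dist_def by (rule LeastI)
  qed
  have par: "\<exists>y. y \<in> S \<and> y \<noteq> x \<and> {y, x} \<in> E \<and> dist y < dist x" if x: "x \<in> S - {r}" for x
  proof -
    have rx: "(r, x) \<in> ?R ^^ dist x" using reach x by blast
    have "dist x \<noteq> 0" using rx x by (cases "dist x") auto
    then obtain j where j: "dist x = Suc j" by (cases "dist x") auto
    then obtain y where y1: "(r, y) \<in> ?R ^^ j" and y2: "(y, x) \<in> ?R" using rx by (auto elim: relpow_Suc_E)
    have "dist y \<le> j" unfolding dist_def using y1 by (rule Least_le)
    then show ?thesis using y2 j unfolding ind_rel_def by (intro exI[of _ y]) auto
  qed
  define f where "f = restrict (\<lambda>x. if x = r then r else (SOME y. y \<in> S \<and> y \<noteq> x \<and> {y, x} \<in> E \<and> dist y < dist x)) S"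
  have fx: "f x \<in> S \<and> f x \<noteq> x \<and> {f x, x} \<in> E \<and> dist (f x) < dist x" if x: "x \<in> S - {r}" for x
  proof -
    have "f x = (SOME y. y \<in> S \<and> y \<noteq> x \<and> {y, x} \<in> E \<and> dist y < dist x)" using x unfolding f_def by auto
    then show ?thesis using someI_ex[OF par[OF x]] by simp
  qed
  have "f \<in> S \<rightarrow>\<^sub>E S"
    unfolding f_def using fx r by (auto simp: f_def split: if_splits)
  moreover have "\<forall>x\<in>S-{r}. {x, f x} \<in> E \<and> f x \<noteq> x" using fx by (auto simp: insert_commute)
  moreover have "inj_on (\<lambda>x. {x, f x}) (S - {r})"
  proof (rule inj_onI)
    fix x x' assume x: "x \<in> S - {r}" and x': "x' \<in> S - {r}" and eq: "{x, f x} = {x', f x'}"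
    show "x = x'"
    proof (rule ccontr)
      assume "x \<noteq> x'"
      then have "x = f x' \<and> f x = x'" using eq by (auto simp: doubleton_eq_iff)
      then show False using fx[OF x] fx[OF x'] by auto
    qed
  qed
  ultimately show ?thesis by blast
qed



lemma pow_div_fact_le_exp:
  fixes x :: real assumes "0 \<le> x"
  shows "x ^ k / fact k \<le> exp x"
proof -
  let ?f = "\<lambda>n. x ^ n /\<^sub>R fact n"
  have s: "summable ?f" by (rule summable_exp_generic)
  have "sum ?f {k} \<le> suminf ?f"
    by (rule sum_le_suminf[OF s]) (use assms in auto)
  also have "suminf ?f = exp x" using exp_converges[of x] sums_unique by metis
  finally show ?thesis by (simp add: divide_inverse mult.commute)
qed

lemma choose_kk_le:
  assumes "k \<le> n"
  shows "real (n choose k) * real k ^ k \<le> (exp 1 * real n) ^ k"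
proof -
  have a: "fact k * fact (n - k) * (n choose k) = (fact n :: nat)" by (rule binomial_fact_lemma[OF assms])
  have b: "fact n div fact (n - k) \<le> n ^ k" by (rule fact_div_fact_le_pow[OF assms])
  have a': "(fact n :: nat) = (fact k * (n choose k)) * fact (n - k)" using a by (simp add: mult_ac)
  have "(fact n :: nat) div fact (n - k) = fact k * (n choose k)"
    unfolding a' by (rule nonzero_mult_div_cancel_right) simp
  then have "fact k * (n choose k) \<le> n ^ k" using b by simp
  then have c: "real (fact k * (n choose k)) \<le> real (n ^ k)" by (rule of_nat_mono)
  then have c: "fact k * real (n choose k) \<le> real n ^ k" by simp
  have d0: "real k ^ k / fact k \<le> exp (real k)" by (rule pow_div_fact_le_exp) simp
  have d: "real k ^ k \<le> exp (real k) * fact k"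
    using d0 by (simp add: divide_le_eq)
  have "real (n choose k) * real k ^ k \<le> real (n choose k) * (exp (real k) * fact k)"
    by (rule mult_left_mono[OF d]) simp
  also have "\<dots> = exp (real k) * (fact k * real (n choose k))" by simp
  also have "\<dots> \<le> exp (real k) * real n ^ k" by (rule mult_left_mono[OF c]) simp
  also have "exp (real k) = exp 1 ^ k" using exp_of_nat_mult[of k 1] by simp
  finally show ?thesis by (simp add: power_mult_distrib)
qed

lemma ln_bound:
  fixes d :: real assumes "160000 \<le> d"
  shows "1 + ln d \<le> d / 160"
proof -
  have "sqrt 160000 \<le> sqrt d" using assms by (rule real_sqrt_le_mono)
  moreover have "sqrt 160000 = (400::real)" by (simp add: real_sqrt_eq_iff power2_eq_square)
  ultimately have sd: "400 \<le> sqrt d" by simp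
  have "ln d = 2 * ln (sqrt d)" using assms by (simp add: ln_sqrt)
  also have "ln (sqrt d) \<le> sqrt d - 1" using sd by (intro ln_le_minus_one) linarith
  finally have l: "ln d \<le> 2 * sqrt d - 2" by simp
  have d0: "0 \<le> d" using assms by linarith
  have e: "d = sqrt d * sqrt d" using real_sqrt_mult_self[of d] d0 by simp
  have m: "sqrt d * 400 \<le> sqrt d * sqrt d" using sd d0 by (intro mult_left_mono) auto
  show ?thesis using l e m sd by linarith
qed

lemma real_choose_two: "real (n choose 2) = real n * (real n - 1) / 2"
proof (induction n)
  case 0 then show ?case by simp
next
  case (Suc n)
  have "Suc n choose Suc 1 = (n choose 1) + (n choose Suc 1)" by (rule binomial_Suc_Suc)
  then have "Suc n choose 2 = n + (n choose 2)" by (simp add: numeral_2_eq_2)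
  then have "real (Suc n choose 2) = real n + real (n choose 2)" by simp
  then show ?case using Suc by (simp add: field_simps)
qed



lemma perk:
  fixes n k :: nat and p :: real
  assumes n: "2 \<le> n" and k1: "1 \<le> k" and kn: "k \<le> n" and p: "0 < p"
    and dd: "160000 \<le> p * n" and kd: "640 * ln n \<le> k * (p * n)"
  shows "real (n choose k) * real k ^ (k + 1) * p ^ (k - 1) * exp (- (p * n * k / 80)) \<le> 1 / real n ^ 2"
proof -
  define d where "d = p * n"
  have d0: "0 < d" using dd d_def by linarith
  have pk: "p ^ (k - 1) = p ^ k / p" using k1 p by (cases k) auto
  have "real (n choose k) * real k ^ (k + 1) * p ^ (k - 1) * exp (- (d * k / 80))
      = (real (n choose k) * real k ^ k) * (k * p ^ (k - 1) * exp (- (d * k / 80)))" by simp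
  also have "\<dots> \<le> (exp 1 * real n) ^ k * (k * p ^ (k - 1) * exp (- (d * k / 80)))"
    by (rule mult_right_mono[OF choose_kk_le[OF kn]]) (use p in simp)
  also have "\<dots> = (k / p) * ((exp 1 * d) ^ k * exp (- (d * k / 80)))"
    unfolding pk d_def using p by (simp add: power_mult_distrib field_simps)
  also have "\<dots> \<le> (k / p) * (1 / real n ^ 4)"
  proof (rule mult_left_mono)
    show "0 \<le> k / p" using p by simp
    have "(exp 1 * d) ^ k = exp (k * (1 + ln d))"
      using d0 by (simp add: exp_of_nat_mult exp_add)
    then have "(exp 1 * d) ^ k * exp (- (d * k / 80)) = exp (k * (1 + ln d) - d * k / 80)"
      using exp_add[of "k * (1 + ln d)" "- (d * k / 80)"] by simp
    also have "\<dots> \<le> exp (- (k * d / 160))"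
    proof -
      have "k * (1 + ln d) \<le> k * (d / 160)" using ln_bound[of d] dd d_def by (intro mult_left_mono) auto
      then have "k * (1 + ln d) - d * k / 80 \<le> - (k * d / 160)" by (simp add: algebra_simps)
      then show ?thesis by simp
    qed
    also have "\<dots> \<le> exp (- (4 * ln n))" using kd d_def by simp
    also have "exp (- (4 * ln n)) = 1 / real n ^ 4"
    proof -
      have "4 * ln (real n) = ln (real n ^ 4)" using n by (simp add: ln_realpow)
      then have "exp (4 * ln (real n)) = real n ^ 4" using n by simp
      then show ?thesis by (simp add: exp_minus divide_inverse)
    qed
    finally show "(exp 1 * d) ^ k * exp (- (d * k / 80)) \<le> 1 / real n ^ 4" .
  qed
  finally have 1: "real (n choose k) * real k ^ (k + 1) * p ^ (k - 1) * exp (- (d * k / 80)) \<le> k / p * (1 / real n ^ 4)" .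
  have "k / p \<le> n / p" using kn p by (simp add: divide_right_mono)
  also have "n / p = n ^ 2 / d" using p n unfolding d_def by (simp add: power2_eq_square)
  also have "\<dots> \<le> n ^ 2" using dd d_def by (simp add: divide_le_eq) (use dd in \<open>simp add: mult_le_cancel_left1 d_def\<close>)
  finally have kp: "k / p \<le> n ^ 2" .
  have "k / p * (1 / real n ^ 4) \<le> n ^ 2 * (1 / real n ^ 4)"
    by (rule mult_right_mono[OF kp]) simp
  also have "\<dots> = 1 / real n ^ 2" using n by (simp add: field_simps power_add[symmetric] eval_nat_numeral)
  finally show ?thesis using 1 unfolding d_def by linarith
qed



definition Fset :: "nat set \<Rightarrow> nat \<Rightarrow> (nat \<Rightarrow> nat) \<Rightarrow> nat set set" where
  "Fset S r f = (\<lambda>x. {x, f x}) ` (S - {r})"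

definition PhiA :: "nat \<Rightarrow> real \<Rightarrow> nat set \<Rightarrow> nat \<Rightarrow> (nat \<Rightarrow> nat) \<Rightarrow> nat set set \<Rightarrow> real" where
  "PhiA n p S r f E = (if Fset S r f \<subseteq> all_edges n \<and> inj_on (\<lambda>x. {x, f x}) (S - {r}) then
     (if Fset S r f \<subseteq> E then 1 else 0) * exp (-1) ^ card (E \<inter> Oset n S) * exp (p * n * card S / 80) else 0)"

lemma PhiA_nonneg: "0 \<le> PhiA n p S r f E"
  unfolding PhiA_def by auto

lemma gexpA:
  fixes p :: real
  assumes S: "S \<subseteq> {1..n}" and r: "r \<in> S" and f: "f \<in> S \<rightarrow>\<^sub>E S"
    and p0: "0 \<le> p" and p1: "p \<le> 1" and small: "real (card S) \<le> 19 / 20 * n"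
  shows "gexp n p (PhiA n p S r f) \<le> p ^ (card S - 1) * exp (- (p * n * card S / 80))"
proof (cases "Fset S r f \<subseteq> all_edges n \<and> inj_on (\<lambda>x. {x, f x}) (S - {r})")
  case False
  have "PhiA n p S r f = (\<lambda>_. 0)"
    by (rule ext) (unfold PhiA_def, rule if_not_P[OF False])
  then have "gexp n p (PhiA n p S r f) = 0" unfolding gexp_def by simp
  then show ?thesis using p0 by simp
next
  case True
  let ?N = "all_edges n"
  let ?F = "Fset S r f"
  let ?O = "Oset n S"
  let ?C = "exp (p * n * card S / 80)"
  have finS: "finite S" using S finite_subset by blast
  have FN: "?F \<subseteq> ?N" using True by simp
  have ON: "?O \<subseteq> ?N" unfolding Oset_def by auto
  have FO: "?F \<inter> ?O = {}"
  proof -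
    have "card (e \<inter> S) \<noteq> 1" if "e \<in> ?F" for e
    proof -
      obtain x where x: "x \<in> S - {r}" "e = {x, f x}" using \<open>e \<in> ?F\<close> unfolding Fset_def by auto
      have "f x \<in> S" using f x by auto
      then have "e \<inter> S = e" using x by auto
      moreover have "card e = 2" using FN \<open>e \<in> ?F\<close> unfolding all_edges_alt by auto
      ultimately show ?thesis by simp
    qed
    then show ?thesis unfolding Oset_def by auto
  qed
  have cardF: "card ?F = card S - 1"
    unfolding Fset_def using True r finS by (simp add: card_image)
  have "gexp n p (PhiA n p S r f) = ?C * gexp n p (\<lambda>E. (if ?F \<subseteq> E then 1 else 0) * exp (-1) ^ card (E \<inter> ?O) * 1 ^ card (E \<inter> {}))"
    unfolding gexp_cmult[symmetric] PhiA_def using True by (intro gexp_cong) simp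
  also have "\<dots> = ?C * (p ^ card ?F * (1 - p + p * exp (-1)) ^ card ?O)"
    by (subst gexp_FOR) (use FN ON FO in auto)
  also have "\<dots> \<le> ?C * (p ^ (card S - 1) * exp (- (p * n * card S / 40)))"
  proof (rule mult_left_mono)
    have e2: "exp (-1) \<le> (1/2::real)"
    proof -
      have "2 \<le> exp (1::real)" using exp_ge_add_one_self[of 1] by simp
      then show ?thesis by (simp add: exp_minus field_simps)
    qed
    have b0: "0 \<le> 1 - p + p * exp (-1)" using p1 p0 by (simp add: add_nonneg_nonneg)
    have b1: "1 - p + p * exp (-1) \<le> exp (- p / 2)"
    proof -
      have "1 - p + p * exp (-1) \<le> 1 + (- p / 2)" using e2 p0 mult_left_mono[OF e2 p0] by simp
      also have "\<dots> \<le> exp (- p / 2)" by (rule exp_ge_add_one_self)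
      finally show ?thesis .
    qed
    have "(1 - p + p * exp (-1)) ^ card ?O \<le> exp (- p / 2) ^ card ?O"
      by (rule power_mono[OF b1 b0])
    also have "\<dots> = exp (- p / 2 * card ?O)" by (simp add: exp_of_nat_mult[symmetric] mult.commute)
    also have "\<dots> \<le> exp (- (p * n * card S / 40))"
    proof -
      have cO: "card S * card ({1..n} - S) \<le> card ?O" by (rule card_Oset[OF S])
      have cd: "card ({1..n} - S) = n - card S" using S finS by (simp add: card_Diff_subset)
      have sn: "card S \<le> n" using S card_mono[OF _ S] by simp
      have "real n / 20 \<le> real (n - card S)" using small sn by (simp add: of_nat_diff)
      then have "real (card S) * (real n / 20) \<le> real (card S) * real (n - card S)"
        by (intro mult_left_mono) auto
      also have "\<dots> \<le> real (card ?O)" using cO cd by (metis of_nat_le_iff of_nat_mult)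
      finally have "real (card S) * (real n / 20) \<le> real (card ?O)" .
      then have "p / 2 * (real (card S) * (real n / 20)) \<le> p / 2 * card ?O" using p0 by (intro mult_left_mono) auto
      then show ?thesis by (simp add: field_simps)
    qed
    finally have "(1 - p + p * exp (-1)) ^ card ?O \<le> exp (- (p * n * card S / 40))" .
    then show "p ^ card ?F * (1 - p + p * exp (-1)) ^ card ?O \<le> p ^ (card S - 1) * exp (- (p * n * card S / 40))"
      unfolding cardF using p0 by (intro mult_left_mono) auto
  qed simp
  also have "\<dots> = p ^ (card S - 1) * exp (- (p * n * card S / 80))"
  proof -
    have "?C * exp (- (p * n * card S / 40)) = exp (- (p * n * card S / 80))"
      unfolding exp_add[symmetric] by simp
    then show ?thesis by (simp add: mult_ac)
  qed
  finally show ?thesis .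
qed



lemma sumA:
  fixes p :: real
  assumes n: "2 \<le> n" and p0: "0 < p" and p1: "p \<le> 1" and dd: "160000 \<le> p * n"
  shows "(\<Sum>S\<in>{S. S \<subseteq> {1..n} \<and> 640 * ln n / (p * n) \<le> card S \<and> real (card S) \<le> 19 / 20 * n}.
            \<Sum>r\<in>S. \<Sum>f\<in>S \<rightarrow>\<^sub>E S. gexp n p (PhiA n p S r f)) \<le> (n + 1) / n ^ 2"
proof -
  define IA where "IA = {S. S \<subseteq> {1..n} \<and> 640 * ln n / (p * n) \<le> card S \<and> real (card S) \<le> 19 / 20 * n}"
  define h where "h k = real k * real k ^ k * (p ^ (k - 1) * exp (- (p * n * k / 80)))" for k :: nat
  have finIA: "finite IA" unfolding IA_def by (rule finite_subset[of _ "Pow {1..n}"]) auto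
  have "(\<Sum>S\<in>IA. \<Sum>r\<in>S. \<Sum>f\<in>S \<rightarrow>\<^sub>E S. gexp n p (PhiA n p S r f))
      \<le> (\<Sum>S\<in>IA. \<Sum>r\<in>S. \<Sum>f\<in>S \<rightarrow>\<^sub>E S. p ^ (card S - 1) * exp (- (p * n * card S / 80)))"
  proof (intro sum_mono)
    fix S r f assume S: "S \<in> IA" and r: "r \<in> S" and f: "f \<in> S \<rightarrow>\<^sub>E S"
    show "gexp n p (PhiA n p S r f) \<le> p ^ (card S - 1) * exp (- (p * n * card S / 80))"
      by (rule gexpA) (use S r f p0 p1 in \<open>auto simp: IA_def\<close>)
  qed
  also have "\<dots> = (\<Sum>S\<in>IA. h (card S))"
  proof (rule sum.cong[OF refl])
    fix S assume S: "S \<in> IA"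
    then have finS: "finite S" unfolding IA_def using finite_subset by blast
    show "(\<Sum>r\<in>S. \<Sum>f\<in>S \<rightarrow>\<^sub>E S. p ^ (card S - 1) * exp (- (p * n * card S / 80))) = h (card S)"
      unfolding h_def using finS by (simp add: card_funcsetE)
  qed
  also have "\<dots> = (\<Sum>k\<in>{0..n}. \<Sum>S\<in>{S \<in> IA. card S = k}. h (card S))"
  proof (rule sum.group[symmetric, OF finIA])
    show "finite {0..n}" by simp
    show "card ` IA \<subseteq> {0..n}"
    proof
      fix k assume "k \<in> card ` IA"
      then obtain S where "S \<in> IA" "k = card S" by auto
      then have "S \<subseteq> {1..n}" unfolding IA_def by auto
      then have "card S \<le> card {1..n}" by (intro card_mono) auto
      then show "k \<in> {0..n}" using \<open>k = card S\<close> by simp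
    qed
  qed
  also have "\<dots> \<le> (\<Sum>k\<in>{0..n}. 1 / real n ^ 2)"
  proof (rule sum_mono)
    fix k assume k: "k \<in> {0..n}"
    let ?A = "{S \<in> IA. card S = k}"
    have "(\<Sum>S\<in>?A. h (card S)) = (\<Sum>S\<in>?A. h k)" by (rule sum.cong) auto
    also have "\<dots> = card ?A * h k" by simp
    finally have eq: "(\<Sum>S\<in>?A. h (card S)) = card ?A * h k" .
    show "(\<Sum>S\<in>?A. h (card S)) \<le> 1 / real n ^ 2"
    proof (cases "?A = {}")
      case True
      then show ?thesis by (simp only: sum.empty) simp
    next
      case False
      then obtain S where S: "S \<in> IA" "card S = k" by auto
      have lnn: "0 < ln (real n)" using n by simp
      have s0: "640 * ln n / (p * n) \<le> k" using S unfolding IA_def by auto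
      have pn: "0 < p * n" using dd by linarith
      have kd: "640 * ln n \<le> k * (p * n)" using s0 pn by (simp add: divide_le_eq mult.commute)
      have k1: "1 \<le> k"
      proof (rule ccontr)
        assume "\<not> 1 \<le> k" then have "k = 0" by simp
        then show False using kd lnn by simp
      qed
      have kn: "k \<le> n" using k by simp
      have h0: "0 \<le> h k" unfolding h_def using p0 by simp
      have "card ?A \<le> card {S. S \<subseteq> {1..n} \<and> card S = k}"
        by (rule card_mono) (auto simp: IA_def intro: finite_subset[of _ "Pow {1..n}"])
      also have "\<dots> = n choose k" using n_subsets[of "{1..n}" k] by simp
      finally have "real (card ?A) \<le> real (n choose k)" by simp
      then have "card ?A * h k \<le> real (n choose k) * h k" using h0 by (intro mult_right_mono) auto
      also have "\<dots> = real (n choose k) * real k ^ (k + 1) * p ^ (k - 1) * exp (- (p * n * k / 80))"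
        unfolding h_def by (simp add: mult_ac)
      also have "\<dots> \<le> 1 / real n ^ 2" by (rule perk[OF n k1 kn p0 dd kd])
      finally show ?thesis using eq by simp
    qed
  qed
  also have "\<dots> = (real n + 1) / real n ^ 2" by simp
  finally show ?thesis unfolding IA_def .
qed



definition PhiB :: "nat \<Rightarrow> nat set \<Rightarrow> nat set set \<Rightarrow> real" where
  "PhiB n S E = 2 ^ card (E \<inter> (all_edges n - Rset S)) * (1/2) ^ card (E \<inter> Rset S)"

lemma gexpB:
  fixes p :: real
  assumes S: "S \<subseteq> {1..n}" and big: "19 / 20 * n \<le> real (card S)" and n: "3 \<le> n"
    and p0: "0 \<le> p" and p1: "p \<le> 1"
  shows "gexp n p (PhiB n S) \<le> exp (- (p * n * n / 10))"
proof -
  let ?N = "all_edges n"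
  let ?R = "Rset S"
  have finS: "finite S" using S finite_subset by blast
  have RN: "?R \<subseteq> ?N" by (rule Rset_sub[OF S])
  have "gexp n p (PhiB n S) = gexp n p (\<lambda>E. (if {} \<subseteq> E then 1 else 0) * 2 ^ card (E \<inter> (?N - ?R)) * (1/2) ^ card (E \<inter> ?R))"
    unfolding PhiB_def by (intro gexp_cong) simp
  also have "\<dots> = (1 - p + p * 2) ^ card (?N - ?R) * (1 - p + p * (1/2)) ^ card ?R"
    by (subst gexp_FOR) (use RN in auto)
  also have "\<dots> \<le> exp (p * card (?N - ?R)) * exp (- (p / 2) * card ?R)"
  proof -
    have a: "(1 - p + p * 2) ^ card (?N - ?R) \<le> exp (p * card (?N - ?R))"
    proof -
      have "(1 - p + p * 2) ^ card (?N - ?R) \<le> exp p ^ card (?N - ?R)"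
        by (rule power_mono) (use exp_ge_add_one_self[of p] p0 in \<open>auto simp: add.commute\<close>)
      then show ?thesis by (simp add: exp_of_nat_mult[symmetric] mult.commute)
    qed
    have b: "(1 - p + p * (1/2)) ^ card ?R \<le> exp (- (p / 2) * card ?R)"
    proof -
      have "(1 - p + p * (1/2)) ^ card ?R \<le> exp (- (p / 2)) ^ card ?R"
        by (rule power_mono) (use exp_ge_add_one_self[of "- (p/2)"] p0 p1 in auto)
      then show ?thesis by (simp add: exp_of_nat_mult[symmetric] mult.commute)
    qed
    have c: "0 \<le> (1 - p + p * (1/2)) ^ card ?R" using p1 by simp
    show ?thesis using mult_mono[OF a b _ c] by simp
  qed
  also have "\<dots> = exp (p * (card (?N - ?R) - card ?R / 2))"
    unfolding exp_add[symmetric] by (simp add: algebra_simps)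
  also have "\<dots> \<le> exp (- (p * n * n / 10))"
  proof -
    have cM: "card (?N - ?R) = card ?N - card ?R" by (rule card_Diff_subset[OF finite_subset[OF RN finite_all_edges] RN])
    have cRN: "card ?R \<le> card ?N" by (rule card_mono[OF finite_all_edges RN])
    have cR: "real (card ?R) = real (card S) * (real (card S) - 1) / 2"
      using card_Rset[OF finS] real_choose_two by simp
    have cN: "real (card ?N) = real n * (real n - 1) / 2"
      using card_all_edges real_choose_two by simp
    have rM: "real (card (?N - ?R)) = real n * (real n - 1) / 2 - real (card S) * (real (card S) - 1) / 2"
      using cM cRN cR cN by (simp add: of_nat_diff)
    define s where "s = real (card S)"
    have s1: "19 / 20 * n \<le> s" using big s_def by simp
    define m where "m = real n"
    have m3: "3 \<le> m" using n m_def by simp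
    have s1: "19 / 20 * m \<le> s" using big s_def m_def by simp
    have A: "19 / 20 * m * (19 / 20 * m - 1) \<le> s * (s - 1)"
      by (rule mult_mono) (use s1 m3 in auto)
    define X where "X = s * (s - 1)"
    define Y where "Y = m * m"
    have B: "19 / 20 * m * (19 / 20 * m - 1) = 361 / 400 * Y - 19 / 20 * m"
      unfolding Y_def by (simp add: algebra_simps)
    have C: "m * (m - 1) = Y - m" unfolding Y_def by (simp add: algebra_simps)
    have D: "3 * m \<le> Y" unfolding Y_def using m3 by (intro mult_right_mono) auto
    have E: "361 / 400 * Y - 19 / 20 * m \<le> X" using A B X_def by simp
    have "(Y - m) / 2 - X / 2 - X / 2 / 2 \<le> - (Y / 10)" using E D m3 by argo
    then have "real n * (real n - 1) / 2 - s * (s - 1) / 2 - s * (s - 1) / 2 / 2 \<le> - (real n * real n / 10)"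
      using C unfolding X_def Y_def m_def by simp
    then have "card (?N - ?R) - card ?R / 2 \<le> - (real n * real n / 10)"
      using rM cR s_def by simp
    then have "p * (card (?N - ?R) - card ?R / 2) \<le> p * (- (real n * real n / 10))"
      using p0 by (intro mult_left_mono) auto
    then show ?thesis by simp
  qed
  finally show ?thesis .
qed

lemma sumB:
  fixes p :: real
  assumes n: "3 \<le> n" and p0: "0 \<le> p" and p1: "p \<le> 1" and dd: "20 \<le> p * n"
  shows "(\<Sum>S\<in>{S. S \<subseteq> {1..n} \<and> 19 / 20 * n \<le> real (card S)}. gexp n p (PhiB n S)) \<le> exp (- real n)"
proof -
  let ?I = "{S. S \<subseteq> {1..n} \<and> 19 / 20 * n \<le> real (card S)}"
  have "(\<Sum>S\<in>?I. gexp n p (PhiB n S)) \<le> (\<Sum>S\<in>?I. exp (- (p * n * n / 10)))"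
    by (rule sum_mono) (rule gexpB, use n p0 p1 in auto)
  also have "\<dots> = card ?I * exp (- (p * n * n / 10))" by simp
  also have "\<dots> \<le> 2 ^ n * exp (- (p * n * n / 10))"
  proof -
    have "card ?I \<le> card (Pow {1..n})" by (rule card_mono) auto
    then have "real (card ?I) \<le> 2 ^ n" by (simp add: card_Pow)
    then show ?thesis by (intro mult_right_mono) auto
  qed
  also have "\<dots> \<le> exp (real n) * exp (- (2 * real n))"
  proof (rule mult_mono)
    have "(2::real) ^ n \<le> exp 1 ^ n" by (rule power_mono) (use exp_ge_add_one_self[of 1] in auto)
    then show "(2::real) ^ n \<le> exp (real n)" by (simp add: exp_of_nat_mult[symmetric])
    have "2 * real n \<le> p * n * n / 10"
    proof -
      have "20 * real n \<le> p * n * n" using dd by (intro mult_right_mono) auto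
      then show ?thesis by simp
    qed
    then show "exp (- (p * n * n / 10)) \<le> exp (- (2 * real n))" by simp
  qed auto
  also have "\<dots> = exp (- real n)" unfolding exp_add[symmetric] by simp
  finally show ?thesis .
qed



definition GoodP :: "real \<Rightarrow> real \<Rightarrow> nat \<Rightarrow> real \<Rightarrow> nat set set \<Rightarrow> bool" where
  "GoodP \<epsilon> c n p E = (\<forall>H. largest_component E n H \<longrightarrow>
          (\<forall>S. S \<subseteq> H \<and> connected_set E S
               \<and> real (card S) \<ge> c * ln (real n) / (p * real n)
               \<and> real (deg_sum E S) \<le> real (deg_sum E H) / 2
               \<longrightarrow> real (e_out E S) \<ge> \<epsilon> * (p * real n) * real (card S)))"

lemma PhiB_ge1:
  assumes E: "E \<subseteq> all_edges n" and S: "S \<subseteq> {1..n}"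
    and deg: "deg_sum E S \<le> deg_sum E ({1..n} - S)"
  shows "1 \<le> PhiB n S E"
proof -
  let ?N = "all_edges n"
  let ?R = "Rset S"
  let ?M = "?N - ?R"
  have fE: "finite E" using E finite_all_edges finite_subset by blast
  have finS: "finite S" using S finite_subset by blast
  have split: "E = (E \<inter> ?R) \<union> (E \<inter> ?M)" using E by auto
  have disj: "(E \<inter> ?R) \<inter> (E \<inter> ?M) = {}" by auto
  have fR: "finite (E \<inter> ?R)" "finite (E \<inter> ?M)" using fE by auto
  have sumsplit: "(\<Sum>e\<in>E. g e) = (\<Sum>e\<in>E \<inter> ?R. g e) + (\<Sum>e\<in>E \<inter> ?M. g e)" for g :: "nat set \<Rightarrow> nat"
    by (subst split) (rule sum.union_disjoint[OF fR disj])
  have "2 * card (E \<inter> ?R) = (\<Sum>e\<in>E \<inter> ?R. card (e \<inter> S))"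
  proof -
    have "(\<Sum>e\<in>E \<inter> ?R. card (e \<inter> S)) = (\<Sum>e\<in>E \<inter> ?R. 2)"
      by (rule sum.cong) (auto simp: Rset_def Int_absorb2)
    then show ?thesis by simp
  qed
  also have "\<dots> \<le> (\<Sum>e\<in>E. card (e \<inter> S))" using sumsplit[of "\<lambda>e. card (e \<inter> S)"] by simp
  also have "\<dots> = deg_sum E S" by (rule deg_sum_alt[OF E finS, symmetric])
  also have "\<dots> \<le> deg_sum E ({1..n} - S)" by (rule deg)
  also have "\<dots> = (\<Sum>e\<in>E. card (e \<inter> ({1..n} - S)))" by (rule deg_sum_alt[OF E]) simp
  also have "\<dots> = (\<Sum>e\<in>E \<inter> ?R. card (e \<inter> ({1..n} - S))) + (\<Sum>e\<in>E \<inter> ?M. card (e \<inter> ({1..n} - S)))"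
    by (rule sumsplit)
  also have "(\<Sum>e\<in>E \<inter> ?R. card (e \<inter> ({1..n} - S))) = 0"
    by (rule sum.neutral) (auto simp: Rset_def)
  also have "(\<Sum>e\<in>E \<inter> ?M. card (e \<inter> ({1..n} - S))) \<le> (\<Sum>e\<in>E \<inter> ?M. 2)"
  proof (rule sum_mono)
    fix e assume "e \<in> E \<inter> ?M"
    then have "card e = 2" "finite e" unfolding all_edges_alt by (auto intro: finite_subset)
    then show "card (e \<inter> ({1..n} - S)) \<le> 2" by (metis card_mono inf_le1)
  qed
  finally have "card (E \<inter> ?R) \<le> card (E \<inter> ?M)" by simp
  then have "(2::real) ^ card (E \<inter> ?R) \<le> 2 ^ card (E \<inter> ?M)" by (rule power_increasing) simp
  then show ?thesis unfolding PhiB_def by (simp add: power_one_over field_simps)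
qed

lemma PhiA_ge1:
  assumes E: "E \<subseteq> all_edges n" and S: "S \<subseteq> {1..n}" and r: "r \<in> S"
    and f: "\<forall>x\<in>S-{r}. {x, f x} \<in> E \<and> f x \<noteq> x" and inj: "inj_on (\<lambda>x. {x, f x}) (S - {r})"
    and eo: "real (e_out E S) < 1 / 80 * (p * real n) * real (card S)"
  shows "1 \<le> PhiA n p S r f E"
proof -
  have FE: "Fset S r f \<subseteq> E" unfolding Fset_def using f by auto
  then have FN: "Fset S r f \<subseteq> all_edges n" using E by auto
  have k: "real (card (E \<inter> Oset n S)) < p * n * card S / 80" using eo e_out_alt[OF E] by simp
  have "PhiA n p S r f E = exp (-1) ^ card (E \<inter> Oset n S) * exp (p * n * card S / 80)"
    unfolding PhiA_def using FE FN inj by simp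
  also have "exp (-1) ^ card (E \<inter> Oset n S) = exp (- real (card (E \<inter> Oset n S)))"
    by (simp add: exp_of_nat_mult[symmetric])
  also have "exp (- real (card (E \<inter> Oset n S))) * exp (p * n * card S / 80) = exp (p * n * card S / 80 - real (card (E \<inter> Oset n S)))"
    unfolding exp_add[symmetric] by simp
  also have "1 \<le> \<dots>" using k by simp
  finally show ?thesis .
qed



lemma main_bound:
  fixes p :: real
  assumes n: "10 \<le> n" and p0: "0 < p" and p1: "p \<le> 1" and dd: "160000 \<le> p * n"
  shows "gnp_prob n p (\<lambda>E. \<not> GoodP (1/80) 640 n p E) \<le> (real n + 1) / real n ^ 2 + exp (- real n)"
proof -
  let ?V = "{1..n}"
  define IA where "IA = {S. S \<subseteq> {1..n} \<and> 640 * ln n / (p * n) \<le> card S \<and> real (card S) \<le> 19 / 20 * n}"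
  define IB where "IB = {S. S \<subseteq> {1..n} \<and> 19 / 20 * n \<le> real (card S)}"
  define SA where "SA E = (\<Sum>S\<in>IA. \<Sum>r\<in>S. \<Sum>f\<in>S \<rightarrow>\<^sub>E S. PhiA n p S r f E)" for E
  define SB where "SB E = (\<Sum>S\<in>IB. PhiB n S E)" for E
  have finIA: "finite IA" unfolding IA_def by (rule finite_subset[of _ "Pow {1..n}"]) auto
  have finIB: "finite IB" unfolding IB_def by (rule finite_subset[of _ "Pow {1..n}"]) auto
  have finA: "finite S" if "S \<in> IA" for S using that unfolding IA_def using finite_subset by blast
  have SA0: "0 \<le> SA E" for E unfolding SA_def by (intro sum_nonneg PhiA_nonneg)
  have SB0: "0 \<le> SB E" for E unfolding SB_def PhiB_def by (intro sum_nonneg) simp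
  have point: "(if \<not> GoodP (1/80) 640 n p E then 1 else 0) \<le> SA E + SB E" if E: "E \<subseteq> all_edges n" for E
  proof (cases "GoodP (1/80) 640 n p E")
    case True
    then show ?thesis using SA0 SB0 by simp
  next
    case False
    then obtain H S where H: "largest_component E n H" and SH: "S \<subseteq> H" and conn: "connected_set E S"
      and s0: "640 * ln (real n) / (p * real n) \<le> real (card S)"
      and dg: "real (deg_sum E S) \<le> real (deg_sum E H) / 2"
      and eo: "real (e_out E S) < 1 / 80 * (p * real n) * real (card S)"
      unfolding GoodP_def by auto
    have HV: "H \<subseteq> ?V" using H unfolding largest_component_def component_def by auto
    then have SV: "S \<subseteq> ?V" using SH by auto
    have finS: "finite S" using SV finite_subset by blast
    have "deg_sum E H \<le> deg_sum E ?V" unfolding deg_sum_def by (rule sum_mono2) (use HV in auto)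
    also have "deg_sum E ?V = deg_sum E (?V - S) + deg_sum E S"
      unfolding deg_sum_def by (rule sum.subset_diff[OF SV]) simp
    finally have deg: "deg_sum E S \<le> deg_sum E (?V - S)" using dg by linarith
    show ?thesis
    proof (cases "real (card S) \<le> 19 / 20 * n")
      case True
      then have SIA: "S \<in> IA" unfolding IA_def using SV s0 by auto
      obtain r where r: "r \<in> S" using conn unfolding connected_set_def by auto
      obtain f where f: "f \<in> S \<rightarrow>\<^sub>E S" and fp: "\<forall>x\<in>S-{r}. {x, f x} \<in> E \<and> f x \<noteq> x"
        and inj: "inj_on (\<lambda>x. {x, f x}) (S - {r})" using parent_fun[OF conn r] by blast
      have "1 \<le> PhiA n p S r f E" by (rule PhiA_ge1[OF E SV r fp inj eo])
      also have "\<dots> \<le> (\<Sum>f\<in>S \<rightarrow>\<^sub>E S. PhiA n p S r f E)"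
        by (rule member_le_sum[OF f]) (auto simp: PhiA_nonneg finite_PiE finS)
      also have "\<dots> \<le> (\<Sum>r\<in>S. \<Sum>f\<in>S \<rightarrow>\<^sub>E S. PhiA n p S r f E)"
        by (rule member_le_sum[OF r]) (auto intro!: sum_nonneg simp: PhiA_nonneg finS)
      also have "\<dots> \<le> SA E" unfolding SA_def
        by (rule member_le_sum[OF SIA]) (auto intro!: sum_nonneg simp: PhiA_nonneg finIA)
      finally have "1 \<le> SA E" .
      then show ?thesis using SB0[of E] by simp
    next
      case False
      then have SIB: "S \<in> IB" unfolding IB_def using SV by auto
      have "1 \<le> PhiB n S E" by (rule PhiB_ge1[OF E SV deg])
      also have "\<dots> \<le> SB E" unfolding SB_def
        by (rule member_le_sum[OF SIB]) (auto simp: PhiB_def finIB)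
      finally have "1 \<le> SB E" .
      then show ?thesis using SA0[of E] by simp
    qed
  qed
  have "gnp_prob n p (\<lambda>E. \<not> GoodP (1/80) 640 n p E) \<le> gexp n p (\<lambda>E. SA E + SB E)"
    unfolding gnp_prob_gexp by (rule gexp_mono) (use p0 p1 point in auto)
  also have "\<dots> = gexp n p SA + gexp n p SB" by (rule gexp_add)
  also have "gexp n p SA = (\<Sum>S\<in>IA. \<Sum>r\<in>S. \<Sum>f\<in>S \<rightarrow>\<^sub>E S. gexp n p (PhiA n p S r f))"
    unfolding SA_def
    by (simp add: gexp_sum finIA finA finite_PiE cong: sum.cong)
  also have "gexp n p SB = (\<Sum>S\<in>IB. gexp n p (PhiB n S))"
    unfolding SB_def by (rule gexp_sum[OF finIB])
  also have "(\<Sum>S\<in>IA. \<Sum>r\<in>S. \<Sum>f\<in>S \<rightarrow>\<^sub>E S. gexp n p (PhiA n p S r f)) \<le> (real n + 1) / real n ^ 2"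
    unfolding IA_def by (rule sumA) (use n p0 p1 dd in auto)
  also have "(\<Sum>S\<in>IB. gexp n p (PhiB n S)) \<le> exp (- real n)"
    unfolding IB_def by (rule sumB) (use n p0 p1 dd in auto)
  finally show ?thesis by simp
qed



lemma gnp_nonneg: "0 \<le> p \<Longrightarrow> p \<le> 1 \<Longrightarrow> 0 \<le> gnp_prob n p P"
proof -
  assume a: "0 \<le> p" "p \<le> 1"
  have "gexp n p (\<lambda>_. 0) \<le> gexp n p (\<lambda>E. if P E then 1 else 0)" by (rule gexp_mono) (use a in auto)
  then show ?thesis unfolding gnp_prob_gexp gexp_def by simp
qed

lemma core:
  fixes p :: "nat \<Rightarrow> real"
  assumes ev: "eventually (\<lambda>n. 160000 / real n \<le> p n \<and> p n \<le> 2 * ln (real n) / real n) sequentially"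
  shows "(\<lambda>n. gnp_prob n (p n) (GoodP (1/80) 640 n (p n))) \<longlonglongrightarrow> 1"
proof (rule tendsto_sandwich)
  have ev2: "eventually (\<lambda>n::nat. 2 * ln (real n) / real n \<le> 1) sequentially" by real_asymp
  have ev3: "eventually (\<lambda>n::nat. 10 \<le> n) sequentially" by (rule eventually_ge_at_top)
  have key: "1 - ((real n + 1) / real n ^ 2 + exp (- real n)) \<le> gnp_prob n (p n) (GoodP (1/80) 640 n (p n))
     \<and> gnp_prob n (p n) (GoodP (1/80) 640 n (p n)) \<le> 1"
    if h: "160000 / real n \<le> p n \<and> p n \<le> 2 * ln (real n) / real n" "2 * ln (real n) / real n \<le> 1" "10 \<le> n" for n
  proof -
    have np: "0 < real n" using h(3) by simp
    have dd: "160000 \<le> p n * n" using h(1) np by (simp add: divide_le_eq)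
    have p0: "0 < p n" using h(1) np by (smt (verit) divide_pos_pos)
    have p1: "p n \<le> 1" using h by linarith
    have tot: "gnp_prob n (p n) (\<lambda>E. GoodP (1/80) 640 n (p n) E) + gnp_prob n (p n) (\<lambda>E. \<not> GoodP (1/80) 640 n (p n) E) = 1"
      by (rule gnp_total)
    have mb: "gnp_prob n (p n) (\<lambda>E. \<not> GoodP (1/80) 640 n (p n) E) \<le> (real n + 1) / real n ^ 2 + exp (- real n)"
      by (rule main_bound[OF h(3) p0 p1 dd])
    have nn: "0 \<le> gnp_prob n (p n) (\<lambda>E. \<not> GoodP (1/80) 640 n (p n) E)" by (rule gnp_nonneg) (use p0 p1 in auto)
    show ?thesis using tot mb nn by (simp add: eta_contract_eq)
  qed
  show "eventually (\<lambda>n. 1 - ((real n + 1) / real n ^ 2 + exp (- real n)) \<le> gnp_prob n (p n) (GoodP (1/80) 640 n (p n))) sequentially"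
    using eventually_conj[OF ev eventually_conj[OF ev2 ev3]] by eventually_elim (use key in blast)
  show "eventually (\<lambda>n. gnp_prob n (p n) (GoodP (1/80) 640 n (p n)) \<le> 1) sequentially"
    using eventually_conj[OF ev eventually_conj[OF ev2 ev3]] by eventually_elim (use key in blast)
  show "(\<lambda>n. 1 - ((real n + 1) / real n ^ 2 + exp (- real n))) \<longlonglongrightarrow> 1" by real_asymp
  show "(\<lambda>n. 1::real) \<longlonglongrightarrow> 1" by simp
qed

theorem lemma6:
  shows "\<exists>\<epsilon>::real>0. \<exists>c::real>0. \<exists>d0::real>1. \<forall>p::nat \<Rightarrow> real.
    eventually (\<lambda>n. d0 / real n \<le> p n \<and> p n \<le> 2 * ln (real n) / real n) sequentially \<longrightarrow>
    (\<lambda>n. gnp_prob n (p n) (\<lambda>E.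
        \<forall>H. largest_component E n H \<longrightarrow>
          (\<forall>S. S \<subseteq> H \<and> connected_set E S
               \<and> real (card S) \<ge> c * ln (real n) / (p n * real n)
               \<and> real (deg_sum E S) \<le> real (deg_sum E H) / 2
               \<longrightarrow> real (e_out E S) \<ge> \<epsilon> * (p n * real n) * real (card S))))
      \<longlonglongrightarrow> 1"
proof (rule exI[of _ "1/80::real"], rule conjI, simp, rule exI[of _ "640::real"], rule conjI, simp,
       rule exI[of _ "160000::real"], rule conjI, simp, intro allI impI)
  fix p :: "nat \<Rightarrow> real"
  assume "eventually (\<lambda>n. 160000 / real n \<le> p n \<and> p n \<le> 2 * ln (real n) / real n) sequentially"
  from core[OF this] show "(\<lambda>n. gnp_prob n (p n) (\<lambda>E.
        \<forall>H. largest_component E n H \<longrightarrow>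
          (\<forall>S. S \<subseteq> H \<and> connected_set E S
               \<and> real (card S) \<ge> 640 * ln (real n) / (p n * real n)
               \<and> real (deg_sum E S) \<le> real (deg_sum E H) / 2
               \<longrightarrow> real (e_out E S) \<ge> 1/80 * (p n * real n) * real (card S))))
      \<longlonglongrightarrow> 1" unfolding GoodP_def .
qed

end
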